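(* Let $n\ge 5$, $k\in\{2,\dots,n-2\}$, and let $P=(P_i)_{i\in\mathbb Z/n}$ be an $n$-gon and $(q_i)_{i\in\mathbb Z/n}$ an $n$-tuple of lines in the projective plane, in general position. Put $Q_i=q_i\cap q_{i-k}$, so that $Q=(Q_i)$ is an $n$-gon with $q_i=Q_iQ_{i+k}$. Then the following are equivalent: (i) for every $i$, the lines $P_iP_{i+1}$, $q_i$, $q_{i-k}$ are concurrent, and the lines $P_iP_{i+k}$, $q_i$, $q_{i-1}$ are concurrent (equivalently, all quadrilateral tiles with clockwise vertex labels $q_{i-k},P_{i+1},q_i,P_i$ and $P_i,q_i,P_{i+k},q_{i-1}$ are coherent); (ii) $Q$ is inscribed in $P$ and $T_k(Q)$ is inscribed in $T_k(P)$.
   Context: For an $n$-gon $P=(P_i)_{i\in\mathbb Z/n}$ in the projective plane and $k\in\{2,\dots,n-2\}$, the $k$-diagonal pentagram map is $T_k(P)=P'$ with $P'_i=P_iP_{i+k}\cap P_{i+1}P_{i+k+1}$ (here $XY$ denotes the line through $X,Y$). A polygon $Q$ is inscribed in $P$ (same number of vertices) if $Q_i$ lies on the line $P_iP_{i+1}$ for all $i$. A quadrilateral tile labeled by points $A,B$ and lines $c,d$ is coherent iff $A=B$, or $c=d$, or the lines $AB$, $c$, $d$ are concurrent; more generally coherence means the multi-ratio $\frac{\boldsymbol c(\mathbf A)\boldsymbol d(\mathbf B)}{\boldsymbol c(\mathbf B)\boldsymbol d(\mathbf A)}$ of lifts equals $1$. *)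

theory Defs
  imports "HOL-Analysis.Analysis"
begin

text \<open>Projective plane RP^2 in homogeneous coordinates: points and lines are
  nonzero vectors in real^3 (up to scaling).  Polygons are n-periodic maps int => real^3.\<close>

definition incident :: "real^3 \<Rightarrow> real^3 \<Rightarrow> bool" where
  "incident X l \<longleftrightarrow> X \<bullet> l = 0"

definition join :: "real^3 \<Rightarrow> real^3 \<Rightarrow> real^3" where
  "join X Y = cross3 X Y"

definition meet :: "real^3 \<Rightarrow> real^3 \<Rightarrow> real^3" where
  "meet l m = cross3 l m"

definition collinear3 :: "real^3 \<Rightarrow> real^3 \<Rightarrow> real^3 \<Rightarrow> bool" where
  "collinear3 a b c \<longleftrightarrow> a \<bullet> cross3 b c = 0"

definition concurrent3 :: "real^3 \<Rightarrow> real^3 \<Rightarrow> real^3 \<Rightarrow> bool" where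
  "concurrent3 l m p \<longleftrightarrow> l \<bullet> cross3 m p = 0"

definition periodic_tuple :: "nat \<Rightarrow> (int \<Rightarrow> real^3) \<Rightarrow> bool" where
  "periodic_tuple n P \<longleftrightarrow> (\<forall>i. P (i + int n) = P i)"

definition gen_pos_points :: "nat \<Rightarrow> (int \<Rightarrow> real^3) \<Rightarrow> bool" where
  "gen_pos_points n P \<longleftrightarrow>
     (\<forall>i j l. i mod int n \<noteq> j mod int n \<and> j mod int n \<noteq> l mod int n \<and> i mod int n \<noteq> l mod int n
        \<longrightarrow> \<not> collinear3 (P i) (P j) (P l))"

definition gen_pos_lines :: "nat \<Rightarrow> (int \<Rightarrow> real^3) \<Rightarrow> bool" where
  "gen_pos_lines n q \<longleftrightarrow>
     (\<forall>i j l. i mod int n \<noteq> j mod int n \<and> j mod int n \<noteq> l mod int n \<and> i mod int n \<noteq> l mod int n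
        \<longrightarrow> \<not> concurrent3 (q i) (q j) (q l))"

definition pentagram :: "nat \<Rightarrow> (int \<Rightarrow> real^3) \<Rightarrow> (int \<Rightarrow> real^3)" where
  "pentagram k P = (\<lambda>i. meet (join (P i) (P (i + int k))) (join (P (i + 1)) (P (i + int k + 1))))"

definition inscribed :: "(int \<Rightarrow> real^3) \<Rightarrow> (int \<Rightarrow> real^3) \<Rightarrow> bool" where
  "inscribed Q P \<longleftrightarrow> (\<forall>i. incident (Q i) (join (P i) (P (i + 1))))"

end

theory Submission
  imports Defs
begin

lemma id1: "cross3 (cross3 a b) (cross3 c a) = (- (a \<bullet> cross3 b c)) *\<^sub>R a"
  by (simp add: cross3_simps forall_3) 
lemma id2: "cross3 (cross3 a b) (cross3 b c) = (a \<bullet> cross3 b c) *\<^sub>R b"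
  by (simp add: cross3_simps forall_3)
lemma id3: "a \<bullet> cross3 b c = b \<bullet> cross3 c a" "a \<bullet> cross3 b c = - (a \<bullet> cross3 c b)"
  by (simp_all add: cross3_simps forall_3)
lemma ex_other:
  fixes a b :: int and n :: nat assumes "n \<ge> 5"
  shows "\<exists>l. l mod int n \<noteq> a mod int n \<and> l mod int n \<noteq> b mod int n"
proof -
  have nd: "\<not> int n dvd 1" "\<not> int n dvd 2" using assms by (auto dest: zdvd_imp_le)
  have 1: "(a+1) mod int n \<noteq> a mod int n" "(a+2) mod int n \<noteq> a mod int n"
    using nd by (auto simp: mod_eq_dvd_iff)
  show ?thesis
  proof (cases "(a+1) mod int n = b mod int n")
    case True
    have "(a+2) mod int n \<noteq> b mod int n"
    proof
      assume "(a+2) mod int n = b mod int n"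
      with True have "(a+2) mod int n = (a+1) mod int n" by simp
      then have "int n dvd (a+2) - (a+1)" by (simp add: mod_eq_dvd_iff)
      with nd show False by simp
    qed
    then show ?thesis using 1 by blast
  next
    case False then show ?thesis using 1 by blast
  qed
qed
lemma shift_ne:
  fixes i :: int and n k :: nat assumes "1 \<le> k" "k < n"
  shows "i mod int n \<noteq> (i + int k) mod int n"
proof
  assume "i mod int n = (i + int k) mod int n"
  then have "int n dvd int k" by (simp add: mod_eq_dvd_iff)
  then have "n dvd k" by simp
  with assms show False by (auto dest: nat_dvd_not_less)
qed

lemma nz_from_gp:
  assumes "gen_pos_points n R" "n \<ge> 5" "i mod int n \<noteq> j mod int n"
  shows "cross3 (R i) (R j) \<noteq> 0"
proof
  assume z: "cross3 (R i) (R j) = 0"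
  obtain l where l: "l mod int n \<noteq> i mod int n" "l mod int n \<noteq> j mod int n"
    using ex_other[OF assms(2)] by blast
  have "\<not> collinear3 (R l) (R i) (R j)" using assms(1,3) l unfolding gen_pos_points_def by metis
  with z show False by (simp add: collinear3_def)
qed

theorem mainTheorem2:
  fixes n k :: nat and P q :: "int \<Rightarrow> real^3"
  assumes "n \<ge> 5" and "2 \<le> k" and "k \<le> n - 2"
    and "periodic_tuple n P" and "periodic_tuple n q"
    and "gen_pos_points n P" and "gen_pos_lines n q"
    and "gen_pos_points n (\<lambda>i. meet (q i) (q (i - int k)))"
    and "gen_pos_points n (pentagram k P)"
  shows "(\<forall>i. concurrent3 (join (P i) (P (i + 1))) (q i) (q (i - int k))
            \<and> concurrent3 (join (P i) (P (i + int k))) (q i) (q (i - 1)))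
         \<longleftrightarrow> (inscribed (\<lambda>i. meet (q i) (q (i - int k))) P
              \<and> inscribed (pentagram k (\<lambda>i. meet (q i) (q (i - int k)))) (pentagram k P))"
proof -
  define Q where "Q = (\<lambda>i. meet (q i) (q (i - int k)))"
  define L where "L = (\<lambda>i. cross3 (P i) (P (i + int k)))"
  define T where "T = pentagram k P"
  have kk: "1 \<le> k" "k < n" using assms(1-3) by auto
  have gQ: "gen_pos_points n Q" using assms(8) unfolding Q_def .
  have gT: "gen_pos_points n T" using assms(9) unfolding T_def .
  have s1: "\<And>i. i mod int n \<noteq> (i + 1) mod int n" using shift_ne[of 1 n] assms(1) by auto
  define \<alpha> where "\<alpha> = (\<lambda>i. - (q i \<bullet> cross3 (q (i - int k)) (q (i + int k))))"
  have QQ: "cross3 (Q i) (Q (i + int k)) = \<alpha> i *\<^sub>R q i" for i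
    unfolding Q_def meet_def \<alpha>_def by (simp add: id1)
  have an: "\<alpha> i \<noteq> 0" for i
    using nz_from_gp[OF gQ assms(1) shift_ne[OF kk, of i]] QQ[of i] by auto
  have TQ: "pentagram k Q i = (\<alpha> i * \<alpha> (i+1)) *\<^sub>R cross3 (q i) (q (i+1))" for i
  proof -
    have e: "i + int k + 1 = (i + 1) + int k" by simp
    show ?thesis unfolding pentagram_def join_def meet_def e
      using QQ[of i] QQ[of "i+1"] by (simp add: cross_mult_left cross_mult_right)
  qed
  define \<beta> where "\<beta> = (\<lambda>i. L i \<bullet> cross3 (L (i+1)) (L (i+2)))"
  have TT: "cross3 (T i) (T (i+1)) = \<beta> i *\<^sub>R L (i+1)" for i
  proof -
    have e: "i + int k + 1 = (i + 1) + int k" "i + 1 + 1 = i + 2" "i + 1 + int k + 1 = (i + 2) + int k" by simp_all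
    show ?thesis unfolding T_def pentagram_def join_def meet_def e L_def \<beta>_def
      by (simp add: id2)
  qed
  have bn: "\<beta> i \<noteq> 0" for i
    using nz_from_gp[OF gT assms(1) s1[of i]] TT[of i] by auto
  have I1: "incident (Q i) (join (P i) (P (i + 1))) \<longleftrightarrow> concurrent3 (join (P i) (P (i + 1))) (q i) (q (i - int k))" for i
    unfolding incident_def concurrent3_def Q_def meet_def by (simp add: inner_commute)
  have I2: "incident (pentagram k Q i) (join (T i) (T (i + 1))) \<longleftrightarrow>
      concurrent3 (join (P (i+1)) (P (i + 1 + int k))) (q (i+1)) (q (i + 1 - 1))" for i
  proof -
    have "incident (pentagram k Q i) (join (T i) (T (i + 1))) \<longleftrightarrow>
       cross3 (q i) (q (i+1)) \<bullet> L (i+1) = 0"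
      unfolding incident_def join_def TQ TT using an[of i] an[of "i+1"] bn[of i]
      by (simp add: inner_commute)
    also have "\<dots> \<longleftrightarrow> concurrent3 (join (P (i+1)) (P (i + 1 + int k))) (q (i+1)) (q (i + 1 - 1))"
      unfolding concurrent3_def join_def L_def using id3(2)[of "cross3 (P (i + 1)) (P (i + 1 + int k))" "q (i+1)" "q i"]
      by (simp add: inner_commute)
    finally show ?thesis .
  qed
  have R2: "(\<forall>i. concurrent3 (join (P i) (P (i + int k))) (q i) (q (i - 1))) \<longleftrightarrow>
      (\<forall>i. incident (pentagram k Q i) (join (T i) (T (i + 1))))"
  proof
    assume h: "\<forall>i. concurrent3 (join (P i) (P (i + int k))) (q i) (q (i - 1))"
    show "\<forall>i. incident (pentagram k Q i) (join (T i) (T (i + 1)))"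
      using h I2 by blast
  next
    assume h: "\<forall>i. incident (pentagram k Q i) (join (T i) (T (i + 1)))"
    show "\<forall>i. concurrent3 (join (P i) (P (i + int k))) (q i) (q (i - 1))"
    proof
      fix i
      have "concurrent3 (join (P (i-1+1)) (P (i - 1 + 1 + int k))) (q (i-1+1)) (q (i - 1 + 1 - 1))"
        using h I2[of "i-1"] by blast
      then show "concurrent3 (join (P i) (P (i + int k))) (q i) (q (i - 1))" by simp
    qed
  qed
  show ?thesis
    unfolding Q_def[symmetric] T_def[symmetric] inscribed_def
    using R2 I1 by blast
qed

end
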